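(* The hypergraph $\mathcal{H}$ (defined in the context) is linear, i.e. any two distinct edges of $\mathcal{H}$ share at most one vertex.
   Context: Let $r \geq 2$ and $l \geq 1$ be integers and $q$ a power of an odd prime. Let $\alpha_1, \dots, \alpha_r$ be distinct elements of $\mathbb{F}_q$, and let $m_1, \dots, m_l$ be distinct elements of $\mathbb{F}_q^* = \mathbb{F}_q\setminus\{0\}$ such that $m_s(\alpha_k - \alpha_i) \neq m_t(\alpha_k - \alpha_j)$ whenever $1 \leq s,t \leq l$ and $i,j,k$ are distinct integers in $\{1,\dots,r\}$. For $1 \leq i \leq r$ let $V_i = \mathbb{F}_q \times \mathbb{F}_q \times \{i\}$. For $x,y \in \mathbb{F}_q$, $a \in \mathbb{F}_q^*$, $s \in \{1,\dots,l\}$ let \[ e(x,y,a,m_s) = \{(x + \alpha_i m_s a,\; y + \alpha_i m_s a^2,\; i) : 1 \leq i \leq r\}. \] $\mathcal{H}$ is the $r$-uniform hypergraph with vertex set $V_1 \cup \dots \cup V_r$ and edge set $\{e(x,y,a,m_s) : x,y \in \mathbb{F}_q,\ a \in \mathbb{F}_q^*,\ 1 \leq s \leq l\}$. *)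

theory Defs
  imports "HOL-Computational_Algebra.Primes"
begin

definition hedge :: "nat \<Rightarrow> (nat \<Rightarrow> 'a::field) \<Rightarrow> 'a \<Rightarrow> 'a \<Rightarrow> 'a \<Rightarrow> 'a \<Rightarrow> ('a \<times> 'a \<times> nat) set" where
  "hedge r \<alpha> x y a ms = {(x + \<alpha> i * ms * a, y + \<alpha> i * ms * a^2, i) | i. 1 \<le> i \<and> i \<le> r}"

definition hvertices :: "nat \<Rightarrow> ('a::field \<times> 'a \<times> nat) set" where
  "hvertices r = {(u, v, i) | u v i. 1 \<le> i \<and> i \<le> r}"

definition hedges :: "nat \<Rightarrow> nat \<Rightarrow> (nat \<Rightarrow> 'a::field) \<Rightarrow> (nat \<Rightarrow> 'a) \<Rightarrow> ('a \<times> 'a \<times> nat) set set" where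
  "hedges r l \<alpha> m = {hedge r \<alpha> x y a (m s) | x y a s. a \<noteq> 0 \<and> 1 \<le> s \<and> s \<le> l}"

definition linear_hypergraph :: "'v set set \<Rightarrow> bool" where
  "linear_hypergraph E \<longleftrightarrow> (\<forall>e1\<in>E. \<forall>e2\<in>E. e1 \<noteq> e2 \<longrightarrow> card (e1 \<inter> e2) \<le> 1)"

end

theory Submission
  imports Defs
begin

lemma key:
  fixes ai aj x y x' y' a a' ms mt :: "'a::field"
  assumes ne: "ai \<noteq> aj" and a: "a \<noteq> 0" and ms: "ms \<noteq> 0"
    and e1: "x + ai * ms * a = x' + ai * mt * a'"
    and e2: "x + aj * ms * a = x' + aj * mt * a'"
    and e3: "y + ai * ms * a^2 = y' + ai * mt * a'^2"
    and e4: "y + aj * ms * a^2 = y' + aj * mt * a'^2"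
  shows "a = a' \<and> ms = mt \<and> x = x' \<and> y = y'"
proof -
  have "(ai - aj) * (ms * a) = (ai - aj) * (mt * a')"
  proof -
    have "x - x' = ai * mt * a' - ai * ms * a" "x - x' = aj * mt * a' - aj * ms * a"
      using e1 e2 by (simp_all add: algebra_simps)
    thus ?thesis by (simp add: algebra_simps)
  qed
  hence c1: "ms * a = mt * a'" using ne by simp
  have "(ai - aj) * (ms * a^2) = (ai - aj) * (mt * a'^2)"
  proof -
    have "y - y' = ai * mt * a'^2 - ai * ms * a^2" "y - y' = aj * mt * a'^2 - aj * ms * a^2"
      using e3 e4 by (simp_all add: algebra_simps)
    thus ?thesis by (simp add: algebra_simps)
  qed
  hence c2: "ms * a^2 = mt * a'^2" using ne by simp
  have "(ms * a) * a = (ms * a) * a'"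
  proof -
    have "(ms * a) * a = ms * a^2" by (simp add: power2_eq_square)
    also have "... = mt * a'^2" by (rule c2)
    also have "... = (mt * a') * a'" by (simp add: power2_eq_square)
    also have "... = (ms * a) * a'" using c1 by simp
    finally show ?thesis .
  qed
  hence aa: "a = a'" using a ms by simp
  hence mm: "ms = mt" using c1 a by simp
  show ?thesis using aa mm e1 e3 by simp
qed

theorem lemma3p5:
  fixes \<alpha> m :: "nat \<Rightarrow> 'a::{finite, field}" and r l :: nat
  assumes q: "\<exists>p k. prime p \<and> odd p \<and> k \<ge> 1 \<and> card (UNIV :: 'a set) = p ^ k"
    and r: "r \<ge> 2" and l: "l \<ge> 1"
    and alpha_inj: "inj_on \<alpha> {1..r}"
    and m_inj: "inj_on m {1..l}"
    and m_nz: "\<forall>s\<in>{1..l}. m s \<noteq> 0"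
    and cond: "\<forall>s\<in>{1..l}. \<forall>t\<in>{1..l}. \<forall>i\<in>{1..r}. \<forall>j\<in>{1..r}. \<forall>k\<in>{1..r}.
       i \<noteq> j \<and> i \<noteq> k \<and> j \<noteq> k \<longrightarrow> m s * (\<alpha> k - \<alpha> i) \<noteq> m t * (\<alpha> k - \<alpha> j)"
  shows "linear_hypergraph (hedges r l \<alpha> m)"
  unfolding linear_hypergraph_def
proof (intro ballI impI)
  fix e1 e2 assume E1: "e1 \<in> hedges r l \<alpha> m" and E2: "e2 \<in> hedges r l \<alpha> m" and ne: "e1 \<noteq> e2"
  from E1 obtain x y a s where e1: "e1 = hedge r \<alpha> x y a (m s)" and a: "a \<noteq> 0" and s: "1 \<le> s" "s \<le> l"
    unfolding hedges_def by blast
  from E2 obtain x' y' a' t where e2: "e2 = hedge r \<alpha> x' y' a' (m t)"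
    unfolding hedges_def by blast
  have ms: "m s \<noteq> 0" using m_nz s by auto
  show "card (e1 \<inter> e2) \<le> 1"
  proof (cases "finite (e1 \<inter> e2)")
    case False thus ?thesis by simp
  next
    case True
    have "\<forall>u\<in>e1 \<inter> e2. \<forall>v\<in>e1 \<inter> e2. u = v"
    proof (intro ballI, rule ccontr)
      fix u v assume u: "u \<in> e1 \<inter> e2" and v: "v \<in> e1 \<inter> e2" and uv: "u \<noteq> v"
      from u obtain i where i: "1 \<le> i" "i \<le> r"
        and u1: "u = (x + \<alpha> i * m s * a, y + \<alpha> i * m s * a^2, i)"
        and u2: "u = (x' + \<alpha> i * m t * a', y' + \<alpha> i * m t * a'^2, i)"
        unfolding e1 e2 hedge_def by auto
      from v obtain j where j: "1 \<le> j" "j \<le> r"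
        and v1: "v = (x + \<alpha> j * m s * a, y + \<alpha> j * m s * a^2, j)"
        and v2: "v = (x' + \<alpha> j * m t * a', y' + \<alpha> j * m t * a'^2, j)"
        unfolding e1 e2 hedge_def by auto
      have ij: "i \<noteq> j" using uv u1 v1 by auto
      have "\<alpha> i \<noteq> \<alpha> j" using alpha_inj i j ij by (auto dest: inj_onD)
      from key[OF this a ms, of x x' "m t" a' y y'] u1 u2 v1 v2
      have "a = a' \<and> m s = m t \<and> x = x' \<and> y = y'" by auto
      hence "e1 = e2" using e1 e2 by simp
      with ne show False by simp
    qed
    thus ?thesis using True by (simp add: card_le_Suc0_iff_eq)
  qed
qed

end
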